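(* Under the standing setup (in particular $d\ge 2$ and $\ker B=\{0\}$), let $(v^k)_{k\ge0}$ be the random sequence generated by Algorithm U. Then, almost surely, the sequence $\bigl(f(v^k)\bigr)_{k\ge0}=\bigl(\|Av^k\|^2/\|Bv^k\|^2\bigr)_{k\ge0}$ is nondecreasing and converges to $\lambda_1$, and $\operatorname{dist}(G_{\lambda_1},v^k)\to 0$ as $k\to\infty$.
   Context: Standing setup. Let $d\ge 2$, $A\in\mathbb R^{m\times d}$, $B\in\mathbb R^{\ell\times d}$ with $\ker B=\{0\}$, so $B^TB$ is symmetric positive definite. $\mathbb S^{d-1}$ is the Euclidean unit sphere of $\mathbb R^d$ and $\mathcal U(\mathbb S^{d-1})$ the uniform (normalized surface) probability measure on it. Define $f(v)=\|Av\|^2/\|Bv\|^2$ for $v\neq0$. A generalized eigenvector of $(A^TA,B^TB)$ is a vector $v\neq 0$ with $A^TAv=\lambda B^TBv$ for some $\lambda\in\mathbb R$ (a generalized eigenvalue); the generalized eigenvalues are exactly the eigenvalues of the symmetric matrix $K=(B^TB)^{-1/2}A^TA(B^TB)^{-1/2}$, listed with multiplicity as $\lambda_1\ge\lambda_2\ge\dots\ge\lambda_d$. For a generalized eigenvalue $\lambda$ let $G_\lambda=\{v\in\mathbb R^d\setminus\{0\}: A^TAv=\lambda B^TBv\}$, and $\dim G_\lambda$ denotes the dimension of the linear subspace $G_\lambda\cup\{0\}$. For a set $G$ and a point $y$, $\operatorname{dist}(G,y)=\inf_{u\in G}\|y-u\|$. Algorithm U. Let $g\sim\mathcal N(0,I_d)$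 and $v^0=g/\|g\|$; let $x^0,x^1,x^2,\dots$ be i.i.d. with law $\mathcal U(\mathbb S^{d-1})$, independent of $g$. Given $v^k\in\mathbb S^{d-1}$, set $s_k(\tau)=f(v^k+\tau x^k)$ for $\tau\in\mathbb R$ with $v^k+\tau x^k\neq0$; let $\tau_k$ be a (measurably chosen) maximizer of $s_k$ over $\tau\in\mathbb R$, with $\tau_k=0$ if no maximizer exists, and set $v^{k+1}=(v^k+\tau_kx^k)/\|v^k+\tau_kx^k\|$. *)

theory Defs
  imports "HOL-Probability.Probability"
begin

definition rq :: "real^'n^'m \<Rightarrow> real^'n^'l \<Rightarrow> real^'n \<Rightarrow> real" where
  "rq A B v = (norm (A *v v))\<^sup>2 / (norm (B *v v))\<^sup>2"

definition geneig_space :: "real^'n^'m \<Rightarrow> real^'n^'l \<Rightarrow> real \<Rightarrow> (real^'n) set" where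
  "geneig_space A B c =
     {v. v \<noteq> 0 \<and> (transpose A ** A) *v v = c *\<^sub>R ((transpose B ** B) *v v)}"

definition geneigs :: "real^'n^'m \<Rightarrow> real^'n^'l \<Rightarrow> real set" where
  "geneigs A B = {c. geneig_space A B c \<noteq> {}}"

definition lambda1 :: "real^'n^'m \<Rightarrow> real^'n^'l \<Rightarrow> real" where
  "lambda1 A B = Max (geneigs A B)"

definition std_gaussian :: "(real^'n) measure" where
  "std_gaussian = density lborel
     (\<lambda>x. ennreal ((2 * pi) powr (- real CARD('n) / 2) * exp (- (norm x)\<^sup>2 / 2)))"

text \<open>Normalized uniform (surface) measure on the unit sphere, given via the
  cone-measure description: sigma(E) = lambda(cone(E) \<inter> ball)/lambda(ball),
  i.e. the image of the uniform distribution on the unit ball under x \<mapsto> x/|x|.\<close>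
definition uniform_sphere :: "(real^'n) measure" where
  "uniform_sphere = distr (uniform_measure lborel (ball 0 1)) borel (\<lambda>x. x /\<^sub>R norm x)"

definition is_line_max :: "real^'n^'m \<Rightarrow> real^'n^'l \<Rightarrow> real^'n \<Rightarrow> real^'n \<Rightarrow> real \<Rightarrow> bool" where
  "is_line_max A B v x t \<longleftrightarrow> v + t *\<^sub>R x \<noteq> 0 \<and>
     (\<forall>s. v + s *\<^sub>R x \<noteq> 0 \<longrightarrow> rq A B (v + s *\<^sub>R x) \<le> rq A B (v + t *\<^sub>R x))"

end

theory Submission
  imports Defs
begin

lemma transpose_inner: "(transpose A *v z) \<bullet> w = z \<bullet> ((A::real^'n^'m) *v w)"
  by (simp add: inner_vec_def matrix_vector_mult_def transpose_def sum_distrib_left sum_distrib_right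
      mult.commute mult.left_commute) (rule sum.swap)

lemma vm_inner: "(z v* A) \<bullet> w = z \<bullet> ((A::real^'n^'m) *v w)"
  using transpose_inner[of A z w] by (simp add: transpose_matrix_vector)

lemma Bv_nz: "\<forall>u. (B::real^'n^'l) *v u = 0 \<longrightarrow> u = 0 \<Longrightarrow> v \<noteq> 0 \<Longrightarrow> B *v v \<noteq> 0"
  by auto

lemma rq_scale: "s \<noteq> 0 \<Longrightarrow> rq A B (s *\<^sub>R v) = rq A B v"
  by (simp add: rq_def matrix_vector_mult_scaleR power_mult_distrib)

lemma rq_nonneg: "rq A B v \<ge> 0"
  by (simp add: rq_def)

lemma rq_cont:
  assumes "\<forall>u. (B::real^'n^'l) *v u = 0 \<longrightarrow> u = 0" "v \<noteq> 0"
  shows "isCont (rq (A::real^'n^'m) B) v"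
proof -
  have "B *v v \<noteq> 0" using assms by auto
  then have "norm (B *v v) ^ 2 \<noteq> 0" by simp
  moreover have "isCont (\<lambda>v. A *v v) v" "isCont (\<lambda>v. B *v v) v"
    by (simp_all add: linear_continuous_at matrix_vector_mul_bounded_linear)
  ultimately show ?thesis unfolding rq_def[abs_def]
    by (intro continuous_intros) auto
qed

locale LA =
  fixes A :: "real^'n^'m" and B :: "real^'n^'l"
  assumes kerB: "\<forall>u. B *v u = 0 \<longrightarrow> u = 0"
begin

abbreviation "f \<equiv> rq A B"

definition eigv :: "real \<Rightarrow> real^'n \<Rightarrow> bool" where
  "eigv c e \<longleftrightarrow> transpose A *v (A *v e) = c *\<^sub>R (transpose B *v (B *v e))"

lemma geneig_space_eq: "geneig_space A B c = {v. v \<noteq> 0 \<and> eigv c v}"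
  by (simp add: geneig_space_def eigv_def matrix_vector_mul_assoc)

lemma Bsq_pos: "v \<noteq> 0 \<Longrightarrow> norm (B *v v) ^ 2 > 0"
  using kerB by auto

lemma f_le_iff: "v \<noteq> 0 \<Longrightarrow> f v \<le> M \<longleftrightarrow> norm (A *v v) ^ 2 \<le> M * norm (B *v v) ^ 2"
  using Bsq_pos[of v] by (simp add: rq_def pos_divide_le_eq)

lemma f_ge_iff: "v \<noteq> 0 \<Longrightarrow> M \<le> f v \<longleftrightarrow> M * norm (B *v v) ^ 2 \<le> norm (A *v v) ^ 2"
  using Bsq_pos[of v] by (simp add: rq_def pos_le_divide_eq)

lemma f_cont: "v \<noteq> 0 \<Longrightarrow> isCont f v"
  using rq_cont[OF kerB] by blast

lemma f_mul: "v \<noteq> 0 \<Longrightarrow> norm (A *v v) ^ 2 = f v * norm (B *v v) ^ 2"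
  using Bsq_pos[of v] by (simp add: rq_def)

lemma exists_max: "\<exists>e. norm e = 1 \<and> (\<forall>v. v \<noteq> 0 \<longrightarrow> f v \<le> f e)"
proof -
  obtain b :: "real^'n" where b: "b \<in> Basis" by (meson ex_in_conv nonempty_Basis)
  have ne: "sphere (0::real^'n) 1 \<noteq> {}" using b by (auto simp: norm_Basis intro!: exI[of _ b])
  have "continuous_on (sphere 0 1) f"
    by (rule continuous_at_imp_continuous_on) (auto intro!: f_cont)
  from continuous_attains_sup[OF compact_sphere ne this]
  obtain e where e: "e \<in> sphere 0 1" "\<And>y. y \<in> sphere 0 1 \<Longrightarrow> f y \<le> f e" by blast
  show ?thesis
  proof (intro exI conjI allI impI)
    show "norm e = 1" using e by simp
    fix v :: "real^'n" assume "v \<noteq> 0"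
    then have "f v = f ((1 / norm v) *\<^sub>R v)" by (simp add: rq_scale)
    also have "\<dots> \<le> f e" using e(2)[of "(1 / norm v) *\<^sub>R v"] \<open>v \<noteq> 0\<close> by simp
    finally show "f v \<le> f e" .
  qed
qed

lemma norm_sq_lin0: "norm (a + t *\<^sub>R b) ^ 2 = norm a ^ 2 + 2 * t * (a \<bullet> b) + t^2 * norm b ^ 2"
  for a b :: "real^'k"
proof -
  have "norm (a + t *\<^sub>R b) ^ 2 = (a + t *\<^sub>R b) \<bullet> (a + t *\<^sub>R b)" by (rule power2_norm_eq_inner)
  also have "\<dots> = a \<bullet> a + 2 * t * (a \<bullet> b) + t^2 * (b \<bullet> b)"
    by (simp add: inner_add_left inner_add_right inner_commute[of b a] power2_eq_square algebra_simps)
  also have "\<dots> = norm a ^ 2 + 2 * t * (a \<bullet> b) + t^2 * norm b ^ 2"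
    by (simp only: power2_norm_eq_inner)
  finally show ?thesis .
qed

lemma norm_sq_lin: "norm (C *v (u + t *\<^sub>R h)) ^ 2 =
   norm (C *v u) ^ 2 + 2 * t * ((C *v u) \<bullet> (C *v h)) + t^2 * norm (C *v h) ^ 2"
  for C :: "real^'n^'k"
  by (simp only: matrix_vector_right_distrib matrix_vector_mult_scaleR norm_sq_lin0)

lemma FO:
  assumes u: "u \<noteq> 0" and mx: "\<forall>v. v \<noteq> 0 \<longrightarrow> f v \<le> f u"
  shows "eigv (f u) u"
proof -
  define M where "M = f u"
  have L0: "(A *v u) \<bullet> (A *v h) - M * ((B *v u) \<bullet> (B *v h)) = 0" for h
  proof (rule ccontr)
    define L where "L = (A *v u) \<bullet> (A *v h) - M * ((B *v u) \<bullet> (B *v h))"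
    define K where "K = norm (A *v h) ^ 2 - M * norm (B *v h) ^ 2"
    assume "\<not> ?thesis" then have L: "L \<noteq> 0" by (simp add: L_def)
    define t where "t = L / (\<bar>K\<bar> + 1)"
    have key: "norm (A *v (u + t *\<^sub>R h)) ^ 2 - M * norm (B *v (u + t *\<^sub>R h)) ^ 2 \<le> 0"
    proof (cases "u + t *\<^sub>R h = 0")
      case True then show ?thesis by simp
    next
      case False then show ?thesis using mx f_le_iff[OF False, of M] by (simp add: M_def)
    qed
    have u0: "norm (A *v u) ^ 2 - M * norm (B *v u) ^ 2 = 0"
      using f_mul[OF u] by (simp add: M_def)
    have "norm (A *v (u + t *\<^sub>R h)) ^ 2 - M * norm (B *v (u + t *\<^sub>R h)) ^ 2
        = (norm (A *v u) ^ 2 - M * norm (B *v u) ^ 2) + 2 * t * L + t^2 * K"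
      unfolding norm_sq_lin L_def K_def by (simp add: algebra_simps)
    also have "\<dots> = L^2 / (\<bar>K\<bar> + 1) * (2 + K / (\<bar>K\<bar> + 1))"
    proof -
      have gen: "2 * (L / a) * L + (L / a)^2 * K = L^2 / a * (2 + K / a)" if "a > 0" for a
        using that by (simp add: field_simps power2_eq_square)
      have "2 * t * L + t^2 * K = L^2 / (\<bar>K\<bar> + 1) * (2 + K / (\<bar>K\<bar> + 1))"
        unfolding t_def by (rule gen) simp
      then show ?thesis using u0 by linarith
    qed
    also have "\<dots> > 0"
    proof -
      have "K / (\<bar>K\<bar> + 1) > -1" by (simp add: field_simps)
      then show ?thesis using L by (intro mult_pos_pos) auto
    qed
    finally show False using key by simp
  qed
  define D where "D = transpose A *v (A *v u) - M *\<^sub>R (transpose B *v (B *v u))"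
  have "D \<bullet> h = 0" for h
    using L0[of h] by (simp add: D_def inner_diff_left transpose_inner vm_inner)
  then have "D = 0" by (metis inner_eq_zero_iff)
  then show ?thesis by (simp add: eigv_def D_def M_def)
qed

lemma eig_inner: "eigv c e \<Longrightarrow> (A *v e) \<bullet> (A *v z) = c * ((B *v e) \<bullet> (B *v z))"
proof -
  assume "eigv c e"
  then have E: "transpose A *v (A *v e) = c *\<^sub>R (transpose B *v (B *v e))" by (simp add: eigv_def)
  have "(A *v e) \<bullet> (A *v z) = (transpose A *v (A *v e)) \<bullet> z" by (simp only: transpose_inner)
  also have "\<dots> = c * ((transpose B *v (B *v e)) \<bullet> z)" by (simp only: E inner_scaleR_left)
  also have "\<dots> = c * ((B *v e) \<bullet> (B *v z))" by (simp only: transpose_inner)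
  finally show ?thesis .
qed

lemma eig_f: "eigv c e \<Longrightarrow> e \<noteq> 0 \<Longrightarrow> f e = c"
  using eig_inner[of c e e] Bsq_pos[of e] by (simp add: rq_def power2_norm_eq_inner)

lemma finite_geneigs: "finite (geneigs A B)"
proof -
  define vc where "vc c = (SOME v. v \<in> geneig_space A B c)" for c
  have vc: "vc c \<noteq> 0 \<and> eigv c (vc c)" if "c \<in> geneigs A B" for c
    using that someI_ex[of "\<lambda>v. v \<in> geneig_space A B c"]
    by (auto simp: vc_def geneigs_def geneig_space_eq)
  have orth: "(B *v vc c) \<bullet> (B *v vc c') = 0" if "c \<in> geneigs A B" "c' \<in> geneigs A B" "c \<noteq> c'" for c c'
  proof -
    have e1: "(A *v vc c) \<bullet> (A *v vc c') = c * ((B *v vc c) \<bullet> (B *v vc c'))"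
      using eig_inner[of c "vc c" "vc c'"] vc[OF that(1)] by simp
    have e2: "(A *v vc c') \<bullet> (A *v vc c) = c' * ((B *v vc c') \<bullet> (B *v vc c))"
      using eig_inner[of c' "vc c'" "vc c"] vc[OF that(2)] by simp
    then have e2': "(A *v vc c) \<bullet> (A *v vc c') = c' * ((B *v vc c) \<bullet> (B *v vc c'))"
      by (simp only: inner_commute)
    have "c * ((B *v vc c) \<bullet> (B *v vc c')) = c' * ((B *v vc c) \<bullet> (B *v vc c'))"
      by (simp only: e1[symmetric] e2'[symmetric])
    then show ?thesis using that(3) by simp
  qed
  have nz: "B *v vc c \<noteq> 0" if "c \<in> geneigs A B" for c using vc[OF that] kerB by auto
  have inj: "inj_on (\<lambda>c. B *v vc c) (geneigs A B)"
  proof (rule inj_onI)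
    fix c c' assume "c \<in> geneigs A B" "c' \<in> geneigs A B" "B *v vc c = B *v vc c'"
    then show "c = c'" using orth[of c c'] nz[of c] by (metis inner_eq_zero_iff)
  qed
  have "independent ((\<lambda>c. B *v vc c) ` geneigs A B)"
    by (rule pairwise_orthogonal_independent)
       (use orth nz in \<open>auto simp: pairwise_def orthogonal_def\<close>)
  then have "finite ((\<lambda>c. B *v vc c) ` geneigs A B)" by (rule eucl.finiteI_independent)
  then show ?thesis using finite_imageD inj by blast
qed

lemma lambda1_char:
  assumes e: "e \<noteq> 0" "\<forall>v. v \<noteq> 0 \<longrightarrow> f v \<le> f e"
  shows "lambda1 A B = f e"
proof -
  have "f e \<in> geneigs A B" using FO[OF e] e(1) by (auto simp: geneigs_def geneig_space_eq)
  moreover have "c \<le> f e" if "c \<in> geneigs A B" for c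
    using that e eig_f by (auto simp: geneigs_def geneig_space_eq)
  ultimately show ?thesis unfolding lambda1_def
    by (intro Max_eqI finite_geneigs) auto
qed

lemma lambda1_props:
  obtains e where "norm e = 1" "f e = lambda1 A B" "eigv (lambda1 A B) e"
    "\<And>v. v \<noteq> 0 \<Longrightarrow> f v \<le> lambda1 A B"
proof -
  obtain e where e: "norm e = 1" "\<forall>v. v \<noteq> 0 \<longrightarrow> f v \<le> f e" using exists_max by blast
  then have e0: "e \<noteq> 0" by auto
  show ?thesis using that[of e] e lambda1_char[OF e0 e(2)] FO[OF e0 e(2)] by auto
qed

lemma f_le_l1: "f v \<le> lambda1 A B"
proof -
  obtain e where e: "norm e = 1" "f e = lambda1 A B" "\<And>v. v \<noteq> 0 \<Longrightarrow> f v \<le> lambda1 A B"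
    using lambda1_props by metis
  show ?thesis
  proof (cases "v = 0")
    case True
    then have "f v = 0" by (simp add: rq_def)
    then show ?thesis using e(2) rq_nonneg[of A B e] by simp
  next
    case False then show ?thesis using e(3) by blast
  qed
qed

end

context LA begin

definition Rd :: "real^'n \<Rightarrow> real^'n \<Rightarrow> real" where
  "Rd y w = (A *v y) \<bullet> (A *v w) - f y * ((B *v y) \<bullet> (B *v w))"

definition Rv :: "real^'n \<Rightarrow> real^'n" where
  "Rv y = transpose A *v (A *v y) - f y *\<^sub>R (transpose B *v (B *v y))"

lemma Rv_inner: "Rv y \<bullet> w = Rd y w"
  by (simp only: Rv_def Rd_def inner_diff_left inner_scaleR_left transpose_inner)

lemma Rd_self: "Rd x x = 0"
proof (cases "x = 0")
  case True then show ?thesis by (simp add: Rd_def)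
next
  case False then show ?thesis using f_mul[OF False] by (simp add: Rd_def power2_norm_eq_inner)
qed

lemma Rd_scale_right: "Rd x (c *\<^sub>R w) = c * Rd x w"
  by (simp add: Rd_def matrix_vector_mult_scaleR right_diff_distrib)

lemma Rd_scale_left: "c \<noteq> 0 \<Longrightarrow> Rd (c *\<^sub>R x) w = c * Rd x w"
  by (simp add: Rd_def matrix_vector_mult_scaleR rq_scale right_diff_distrib)

lemma Rd_zero: "Rd 0 w = 0" by (simp add: Rd_def)

lemma f_gt_iff: "v \<noteq> 0 \<Longrightarrow> M < f v \<longleftrightarrow> M * norm (B *v v) ^ 2 < norm (A *v v) ^ 2"
  using f_le_iff[of v M] f_ge_iff[of v M] Bsq_pos[of v] by (simp add: rq_def pos_less_divide_eq)

lemma f_lt_iff: "v \<noteq> 0 \<Longrightarrow> f v < M \<longleftrightarrow> norm (A *v v) ^ 2 < M * norm (B *v v) ^ 2"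
  using Bsq_pos[of v] by (simp add: rq_def pos_divide_less_eq)

lemma indep_wx:
  assumes "Rd x w \<noteq> 0" "a *\<^sub>R w + b *\<^sub>R x = 0"
  shows "a = 0 \<and> b = 0"
proof (cases "a = 0")
  case True
  then have "b *\<^sub>R x = 0" using assms(2) by simp
  moreover have "x \<noteq> 0" using assms(1) Rd_zero by auto
  ultimately show ?thesis using True by simp
next
  case False
  have "a *\<^sub>R w = (- b) *\<^sub>R x" using assms(2) by (simp add: add_eq_0_iff2)
  then have "Rd x (a *\<^sub>R w) = 0" by (simp only: Rd_scale_right Rd_self mult_zero_right)
  then have "a * Rd x w = 0" by (simp only: Rd_scale_right)
  then show ?thesis using assms(1) False by simp
qed

lemma f_minus: "f (- v) = f v"
  using rq_scale[of "-1" A B v] by simp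

lemma improve_exists:
  assumes R: "Rd x w \<noteq> 0"
  shows "\<exists>s. f x < f (x + s *\<^sub>R w)"
proof -
  have x0: "x \<noteq> 0" using R Rd_zero by auto
  define a0 where "a0 = norm (A *v x) ^ 2"
  define b0 where "b0 = norm (B *v x) ^ 2"
  define p where "p = (A *v x) \<bullet> (A *v w)"
  define q where "q = (B *v x) \<bullet> (B *v w)"
  define a2 where "a2 = norm (A *v w) ^ 2"
  define b2 where "b2 = norm (B *v w) ^ 2"
  have b0: "b0 > 0" using Bsq_pos[OF x0] by (simp add: b0_def)
  have fx: "f x = a0 / b0" by (simp add: rq_def a0_def b0_def)
  define L where "L = b0 * p - a0 * q"
  define K where "K = b0 * a2 - a0 * b2"
  have "Rd x w = p - a0 / b0 * q" by (simp add: Rd_def p_def q_def fx)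
  then have "L = b0 * Rd x w" using b0 by (simp add: L_def field_simps)
  then have L: "L \<noteq> 0" using R b0 by simp
  define s where "s = L / (\<bar>K\<bar> + 1)"
  have gen: "2 * (L / a) * L + (L / a)^2 * K = L^2 / a * (2 + K / a)" if "a > 0" for a
    using that by (simp add: field_simps power2_eq_square)
  have pos: "2 * s * L + s^2 * K > 0"
  proof -
    have "2 * s * L + s^2 * K = L^2 / (\<bar>K\<bar> + 1) * (2 + K / (\<bar>K\<bar> + 1))"
      unfolding s_def by (rule gen) simp
    moreover have "L^2 / (\<bar>K\<bar> + 1) * (2 + K / (\<bar>K\<bar> + 1)) > 0"
    proof -
      have "K / (\<bar>K\<bar> + 1) > -1" by (simp add: field_simps)
      then show ?thesis using L by (intro mult_pos_pos) auto
    qed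
    ultimately show ?thesis by simp
  qed
  have nz: "x + s *\<^sub>R w \<noteq> 0"
  proof
    assume "x + s *\<^sub>R w = 0"
    then have "s *\<^sub>R w + 1 *\<^sub>R x = 0" by (simp only: scaleR_one add.commute)
    from indep_wx[OF R this] show False by simp
  qed
  have "f x * norm (B *v (x + s *\<^sub>R w)) ^ 2 < norm (A *v (x + s *\<^sub>R w)) ^ 2"
  proof -
    have eA: "norm (A *v (x + s *\<^sub>R w)) ^ 2 = a0 + 2 * s * p + s^2 * a2"
      by (simp only: norm_sq_lin a0_def p_def a2_def)
    have eB: "norm (B *v (x + s *\<^sub>R w)) ^ 2 = b0 + 2 * s * q + s^2 * b2"
      by (simp only: norm_sq_lin b0_def q_def b2_def)
    have d: "b0 * (a0 + 2 * s * p + s^2 * a2) - a0 * (b0 + 2 * s * q + s^2 * b2) = 2 * s * L + s^2 * K"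
      unfolding L_def K_def by (simp add: algebra_simps)
    have "a0 * (b0 + 2 * s * q + s^2 * b2) < b0 * (a0 + 2 * s * p + s^2 * a2)"
      using d pos by linarith
    then have "a0 / b0 * (b0 + 2 * s * q + s^2 * b2) < a0 + 2 * s * p + s^2 * a2"
      using b0 by (simp add: pos_divide_less_eq mult.commute)
    then show ?thesis by (simp only: fx eA eB)
  qed
  then show ?thesis using f_gt_iff[OF nz] by blast
qed

lemma line_max_exists:
  assumes R: "Rd x w \<noteq> 0"
  shows "\<exists>t. is_line_max A B w x t"
proof -
  obtain s where s: "f x < f (x + s *\<^sub>R w)" using improve_exists[OF R] by blast
  define z where "z \<theta> = cos \<theta> *\<^sub>R w + sin \<theta> *\<^sub>R x" for \<theta>
  have znz: "z \<theta> \<noteq> 0" for \<theta>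
  proof
    assume "z \<theta> = 0"
    then have "cos \<theta> = 0 \<and> sin \<theta> = 0" using indep_wx[OF R] by (simp add: z_def)
    then show False using sin_cos_squared_add[of \<theta>] by simp
  qed
  have "continuous_on {0..2*pi} (\<lambda>\<theta>. f (z \<theta>))"
  proof (rule continuous_at_imp_continuous_on, intro ballI)
    fix \<theta> :: real
    have "isCont z \<theta>" unfolding z_def[abs_def] by (intro continuous_intros)
    then show "isCont (\<lambda>\<theta>. f (z \<theta>)) \<theta>"
      using f_cont[OF znz[of \<theta>]] by (rule isCont_o2)
  qed
  from continuous_attains_sup[OF compact_Icc _ this]
  obtain \<theta>s where \<theta>s: "\<theta>s \<in> {0..2*pi}" "\<And>\<theta>. \<theta> \<in> {0..2*pi} \<Longrightarrow> f (z \<theta>) \<le> f (z \<theta>s)"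
    by auto
  have bound: "f (w + t *\<^sub>R x) \<le> f (z \<theta>s)" for t
  proof -
    define r where "r = sqrt (1 + t^2)"
    have r: "r > 0" by (simp add: r_def add_pos_nonneg)
    have "(1 / r)^2 + (t / r)^2 = 1"
      using r by (simp add: r_def power_divide field_simps)
    then obtain \<theta> where \<theta>: "0 \<le> \<theta>" "\<theta> \<le> 2 * pi" "1 / r = cos \<theta>" "t / r = sin \<theta>"
      using sincos_total_2pi_le by blast
    have st: "sin \<theta> = t * cos \<theta>" using \<theta>(3,4) by (metis times_divide_eq_right mult_1_right)
    have "z \<theta> = cos \<theta> *\<^sub>R (w + t *\<^sub>R x)"
      by (simp add: z_def scaleR_add_right st)
    then have "z \<theta> = (1 / r) *\<^sub>R (w + t *\<^sub>R x)" using \<theta>(3) by simp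
    then have "f (z \<theta>) = f (w + t *\<^sub>R x)" using r by (simp add: rq_scale)
    then show ?thesis using \<theta>s(2)[of \<theta>] \<theta> by simp
  qed
  show ?thesis
  proof (cases "cos \<theta>s = 0")
    case False
    define \<tau> where "\<tau> = sin \<theta>s / cos \<theta>s"
    have "w + \<tau> *\<^sub>R x = (1 / cos \<theta>s) *\<^sub>R z \<theta>s"
      using False by (simp add: z_def \<tau>_def scaleR_add_right)
    then have eq: "f (w + \<tau> *\<^sub>R x) = f (z \<theta>s)" and nz: "w + \<tau> *\<^sub>R x \<noteq> 0"
      using False znz[of \<theta>s] by (simp_all add: rq_scale)
    have "is_line_max A B w x \<tau>"
      unfolding is_line_max_def using nz bound eq by simp
    then show ?thesis by blast
  next
    case True
    then have "sin \<theta>s = 1 \<or> sin \<theta>s = -1"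
      using sin_cos_squared_add[of \<theta>s] by (simp add: power2_eq_1_iff)
    then have fz: "f (z \<theta>s) = f x"
      using True by (auto simp: z_def f_minus)
    have s0: "s \<noteq> 0" using s by auto
    have "x + s *\<^sub>R w = s *\<^sub>R (w + (1 / s) *\<^sub>R x)"
      using s0 by (simp add: scaleR_add_right)
    then have "f (x + s *\<^sub>R w) = f (w + (1 / s) *\<^sub>R x)" using s0 by (simp add: rq_scale)
    then have "f (x + s *\<^sub>R w) \<le> f x" using bound[of "1 / s"] fz by simp
    then show ?thesis using s by simp
  qed
qed

lemma line_max_ge:
  assumes x0: "x \<noteq> 0" and lm: "is_line_max A B w x t"
  shows "f x \<le> f (w + t *\<^sub>R x)"
proof -
  define X where "X n = x + (1 / real (Suc n)) *\<^sub>R w" for n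
  have "(\<lambda>n. 1 / real (Suc n)) \<longlonglongrightarrow> 0" using LIMSEQ_inverse_real_of_nat by (simp add: inverse_eq_divide) 
  then have "X \<longlonglongrightarrow> x + 0 *\<^sub>R w" unfolding X_def by (intro tendsto_intros)
  then have XL: "X \<longlonglongrightarrow> x" by simp
  then have lim: "(\<lambda>n. f (X n)) \<longlonglongrightarrow> f x" using f_cont[OF x0] isCont_tendsto_compose by blast
  have "eventually (\<lambda>n. X n \<noteq> 0) sequentially" using XL x0 by (rule tendsto_imp_eventually_ne)
  then obtain N where N: "\<And>n. n \<ge> N \<Longrightarrow> X n \<noteq> 0" by (auto simp: eventually_sequentially)
  have "f (X n) \<le> f (w + t *\<^sub>R x)" if "n \<ge> N" for n
  proof -
    have eq: "X n = (1 / real (Suc n)) *\<^sub>R (w + real (Suc n) *\<^sub>R x)"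
      by (simp add: X_def scaleR_add_right add.commute)
    then have "w + real (Suc n) *\<^sub>R x \<noteq> 0" using N[OF that] by auto
    then have "f (w + real (Suc n) *\<^sub>R x) \<le> f (w + t *\<^sub>R x)" using lm by (simp add: is_line_max_def)
    then show ?thesis using eq by (simp add: rq_scale)
  qed
  then show ?thesis using LIMSEQ_le_const2[OF lim] by blast
qed

lemma line_max_ge0:
  assumes w0: "w \<noteq> 0" and lm: "is_line_max A B w x t"
  shows "f w \<le> f (w + t *\<^sub>R x)"
proof -
  have "w + 0 *\<^sub>R x \<noteq> 0 \<longrightarrow> f (w + 0 *\<^sub>R x) \<le> f (w + t *\<^sub>R x)"
    using lm unfolding is_line_max_def by blast
  then show ?thesis using w0 by simp
qed

end

context LA begin

definition S :: "real^'n \<Rightarrow> real^'n \<Rightarrow> real" where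
  "S y w = ((A *v y) \<bullet> (A *v w)) * norm (B *v y) ^ 2 - norm (A *v y) ^ 2 * ((B *v y) \<bullet> (B *v w))"

lemma S_Rd: "y \<noteq> 0 \<Longrightarrow> Rd y w = S y w / norm (B *v y) ^ 2"
  using Bsq_pos[of y] by (simp add: Rd_def S_def rq_def field_simps)

lemma S_nz_Rd: assumes "S y w \<noteq> 0" shows "y \<noteq> 0" "Rd y w \<noteq> 0"
proof -
  show y: "y \<noteq> 0" using assms by (auto simp: S_def)
  show "Rd y w \<noteq> 0" using assms Bsq_pos[OF y] by (simp add: S_Rd[OF y])
qed

lemma inner_lin: "(C *v (e + t *\<^sub>R u)) \<bullet> z = (C *v e) \<bullet> z + t * ((C *v u) \<bullet> z)"
  for C :: "real^'n^'k"
  by (simp add: matrix_vector_right_distrib matrix_vector_mult_scaleR inner_add_left)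

lemma poly_id:
  fixes a0 a1 b00 b01 b11 c00 c01 c11 d0 d1 t \<Lambda> :: real
  assumes "a0 = \<Lambda> * d0" "c00 = \<Lambda> * b00" "c01 = \<Lambda> * b01"
  shows "(a0 + t * a1) * (b00 + 2 * t * b01 + t^2 * b11) - (c00 + 2 * t * c01 + t^2 * c11) * (d0 + t * d1)
    = t * (b00 * (a1 - \<Lambda> * d1) + t * (2 * a1 * b01 + \<Lambda> * d0 * b11 - c11 * d0 - 2 * \<Lambda> * b01 * d1)
        + t^2 * (a1 * b11 - c11 * d1))"
  unfolding assms by (simp add: algebra_simps power2_eq_square power3_eq_cube)

lemma ex_at_right: "eventually P (at_right (0::real)) \<Longrightarrow> \<exists>t. P t"
  using eventually_happens'[OF trivial_limit_at_right_real] by blast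

lemma f_near:
  assumes "y0 \<noteq> 0" "c < f y0"
  shows "eventually (\<lambda>t. c < f (y0 + t *\<^sub>R h)) (at_right (0::real))"
proof -
  have "((\<lambda>t. y0 + t *\<^sub>R h) \<longlongrightarrow> y0 + 0 *\<^sub>R h) (at_right (0::real))"
    by (intro tendsto_intros)
  then have "((\<lambda>t. y0 + t *\<^sub>R h) \<longlongrightarrow> y0) (at_right (0::real))" by simp
  then have "((\<lambda>t. f (y0 + t *\<^sub>R h)) \<longlongrightarrow> f y0) (at_right (0::real))"
    using f_cont[OF assms(1)] isCont_tendsto_compose by blast
  then show ?thesis using assms(2) order_tendstoD(1) by blast
qed

lemma witness0:
  assumes e: "e \<noteq> 0" "eigv (lambda1 A B) e"
    and u: "u \<noteq> 0" "f u < lambda1 A B"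
    and c: "c < lambda1 A B" and w: "w \<noteq> 0"
  shows "\<exists>y. c < f y \<and> S y w \<noteq> 0"
proof (cases "eigv (lambda1 A B) w")
  case False
  define \<Lambda> where "\<Lambda> = lambda1 A B"
  define u1 where "u1 = transpose A *v (A *v w) - \<Lambda> *\<^sub>R (transpose B *v (B *v w))"
  have u1: "u1 \<noteq> 0" using False by (simp add: u1_def eigv_def \<Lambda>_def)
  define a0 where "a0 = (A *v e) \<bullet> (A *v w)"
  define a1 where "a1 = (A *v u1) \<bullet> (A *v w)"
  define b00 where "b00 = norm (B *v e) ^ 2"
  define b01 where "b01 = (B *v e) \<bullet> (B *v u1)"
  define b11 where "b11 = norm (B *v u1) ^ 2"
  define c00 where "c00 = norm (A *v e) ^ 2"
  define c01 where "c01 = (A *v e) \<bullet> (A *v u1)"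
  define c11 where "c11 = norm (A *v u1) ^ 2"
  define d0 where "d0 = (B *v e) \<bullet> (B *v w)"
  define d1 where "d1 = (B *v u1) \<bullet> (B *v w)"
  have r1: "a0 = \<Lambda> * d0" unfolding a0_def d0_def \<Lambda>_def by (rule eig_inner[OF e(2)])
  have r2: "c00 = \<Lambda> * b00" unfolding c00_def b00_def \<Lambda>_def power2_norm_eq_inner by (rule eig_inner[OF e(2)])
  have r3: "c01 = \<Lambda> * b01" unfolding c01_def b01_def \<Lambda>_def by (rule eig_inner[OF e(2)])
  have "a1 - \<Lambda> * d1 = u1 \<bullet> u1"
  proof -
    have "a1 = (transpose A *v (A *v w)) \<bullet> u1" unfolding a1_def transpose_inner by (rule inner_commute)
    moreover have "d1 = (transpose B *v (B *v w)) \<bullet> u1" unfolding d1_def transpose_inner by (rule inner_commute)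
    ultimately show ?thesis by (simp add: u1_def inner_diff_left inner_commute)
  qed
  then have s1pos: "b00 * (a1 - \<Lambda> * d1) > 0"
    using u1 Bsq_pos[OF e(1)] by (simp add: b00_def)
  define s2 where "s2 = 2 * a1 * b01 + \<Lambda> * d0 * b11 - c11 * d0 - 2 * \<Lambda> * b01 * d1"
  define s3 where "s3 = a1 * b11 - c11 * d1"
  have Seq: "S (e + t *\<^sub>R u1) w = t * (b00 * (a1 - \<Lambda> * d1) + t * s2 + t^2 * s3)" for t
  proof -
    have "S (e + t *\<^sub>R u1) w = (a0 + t * a1) * (b00 + 2 * t * b01 + t^2 * b11)
        - (c00 + 2 * t * c01 + t^2 * c11) * (d0 + t * d1)"
      unfolding S_def norm_sq_lin inner_lin a0_def a1_def b00_def b01_def b11_def c00_def c01_def c11_def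
        d0_def d1_def ..
    also have "\<dots> = t * (b00 * (a1 - \<Lambda> * d1) + t * s2 + t^2 * s3)"
      unfolding s2_def s3_def by (rule poly_id[OF r1 r2 r3])
    finally show ?thesis .
  qed
  have ev1: "eventually (\<lambda>t. 0 < b00 * (a1 - \<Lambda> * d1) + t * s2 + t^2 * s3) (at_right (0::real))"
  proof -
    have "((\<lambda>t. b00 * (a1 - \<Lambda> * d1) + t * s2 + t^2 * s3) \<longlongrightarrow>
        b00 * (a1 - \<Lambda> * d1) + 0 * s2 + 0^2 * s3) (at_right (0::real))"
      by (intro tendsto_intros)
    then show ?thesis using s1pos order_tendstoD(1) by fastforce
  qed
  have "c < f e" using c eig_f[OF e(2) e(1)] by simp
  then have "eventually (\<lambda>t. 0 < t \<and> c < f (e + t *\<^sub>R u1) \<and> 0 < b00 * (a1 - \<Lambda> * d1) + t * s2 + t^2 * s3)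
      (at_right (0::real))"
    by (rule eventually_conj[OF eventually_at_right_less eventually_conj[OF f_near[OF e(1)] ev1]])
  then obtain t where t: "0 < t" "c < f (e + t *\<^sub>R u1)" "0 < b00 * (a1 - \<Lambda> * d1) + t * s2 + t^2 * s3"
    using ex_at_right by blast
  have "S (e + t *\<^sub>R u1) w \<noteq> 0" using t by (simp add: Seq)
  then show ?thesis using t by blast
next
  case True
  define \<Lambda> where "\<Lambda> = lambda1 A B"
  have wA: "(A *v w) \<bullet> (A *v z) = \<Lambda> * ((B *v w) \<bullet> (B *v z))" for z
    unfolding \<Lambda>_def by (rule eig_inner[OF True])
  have quad: "\<Lambda> * norm (B *v (w + t *\<^sub>R u)) ^ 2 - norm (A *v (w + t *\<^sub>R u)) ^ 2
      = t^2 * (\<Lambda> * norm (B *v u) ^ 2 - norm (A *v u) ^ 2)" for t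
  proof -
    have "norm (A *v w) ^ 2 = \<Lambda> * norm (B *v w) ^ 2"
      unfolding power2_norm_eq_inner by (rule wA)
    then show ?thesis unfolding norm_sq_lin wA by (simp add: algebra_simps)
  qed
  have Seq: "S (w + t *\<^sub>R u) w = ((B *v w) \<bullet> (B *v w) + t * ((B *v u) \<bullet> (B *v w))) *
      (t^2 * (\<Lambda> * norm (B *v u) ^ 2 - norm (A *v u) ^ 2))" for t
  proof -
    have "(A *v (w + t *\<^sub>R u)) \<bullet> (A *v w) = \<Lambda> * ((B *v (w + t *\<^sub>R u)) \<bullet> (B *v w))"
      using wA[of "w + t *\<^sub>R u"] by (simp only: inner_commute)
    then have "S (w + t *\<^sub>R u) w = ((B *v (w + t *\<^sub>R u)) \<bullet> (B *v w)) *
       (\<Lambda> * norm (B *v (w + t *\<^sub>R u)) ^ 2 - norm (A *v (w + t *\<^sub>R u)) ^ 2)"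
      unfolding S_def by (simp add: algebra_simps)
    then show ?thesis unfolding quad inner_lin .
  qed
  have upos: "\<Lambda> * norm (B *v u) ^ 2 - norm (A *v u) ^ 2 > 0"
    using f_lt_iff[OF u(1), of \<Lambda>] u(2) by (simp add: \<Lambda>_def)
  have Bw: "(B *v w) \<bullet> (B *v w) > 0" using kerB w by auto
  have ev1: "eventually (\<lambda>t. 0 < (B *v w) \<bullet> (B *v w) + t * ((B *v u) \<bullet> (B *v w))) (at_right (0::real))"
  proof -
    have "((\<lambda>t. (B *v w) \<bullet> (B *v w) + t * ((B *v u) \<bullet> (B *v w))) \<longlongrightarrow>
        (B *v w) \<bullet> (B *v w) + 0 * ((B *v u) \<bullet> (B *v w))) (at_right (0::real))"
      by (intro tendsto_intros)
    then show ?thesis using Bw order_tendstoD(1) by fastforce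
  qed
  have "c < f w" using c eig_f[OF True w] by simp
  then have "eventually (\<lambda>t. 0 < t \<and> c < f (w + t *\<^sub>R u) \<and> 0 < (B *v w) \<bullet> (B *v w) + t * ((B *v u) \<bullet> (B *v w)))
      (at_right (0::real))"
    by (rule eventually_conj[OF eventually_at_right_less eventually_conj[OF f_near[OF w] ev1]])
  then obtain t where t: "0 < t" "c < f (w + t *\<^sub>R u)" "0 < (B *v w) \<bullet> (B *v w) + t * ((B *v u) \<bullet> (B *v w))"
    using ex_at_right by blast
  have "S (w + t *\<^sub>R u) w \<noteq> 0" using t upos by (simp add: Seq)
  then show ?thesis using t by blast
qed

lemma witness:
  assumes e: "e \<noteq> 0" "eigv (lambda1 A B) e"
    and u: "u \<noteq> 0" "f u < lambda1 A B"
    and c: "c < lambda1 A B" and w: "w \<noteq> 0"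
  shows "\<exists>y. norm y = 1 \<and> c < f y \<and> Rd y w \<noteq> 0"
proof -
  obtain y where y: "c < f y" "S y w \<noteq> 0" using witness0[OF assms] by blast
  have y0: "y \<noteq> 0" and R: "Rd y w \<noteq> 0" using S_nz_Rd[OF y(2)] by auto
  have n: "1 / norm y \<noteq> 0" using y0 by simp
  show ?thesis
    by (rule exI[of _ "(1 / norm y) *\<^sub>R y"])
       (use y0 y R n in \<open>simp add: rq_scale Rd_scale_left\<close>)
qed

end

context LA begin

lemma Rv_cont: "y \<noteq> 0 \<Longrightarrow> isCont Rv y"
proof -
  assume y: "y \<noteq> 0"
  have c1: "isCont (\<lambda>y. transpose A *v (A *v y)) y" "isCont (\<lambda>y. transpose B *v (B *v y)) y"
    by (simp_all add: linear_continuous_at matrix_vector_mul_bounded_linear matrix_vector_mul_assoc)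
  show ?thesis unfolding Rv_def[abs_def]
    by (intro continuous_intros c1 f_cont[OF y])
qed

lemma spanning_family:
  assumes H: "\<forall>w. w \<noteq> 0 \<longrightarrow> (\<exists>y. norm y = 1 \<and> c < f y \<and> Rd y w \<noteq> 0)"
  shows "\<exists>K (Y::nat \<Rightarrow> real^'n). K > 0 \<and> (\<forall>i<K. norm (Y i) = 1 \<and> c < f (Y i)) \<and>
           (\<forall>w. (\<forall>i<K. Rd (Y i) w = 0) \<longrightarrow> w = 0)"
proof -
  define W where "W = {y :: real^'n. norm y = 1 \<and> c < f y}"
  obtain Bs where Bs: "Bs \<subseteq> Rv ` W" "independent Bs" "Rv ` W \<subseteq> span Bs" "card Bs = dim (Rv ` W)"
    by (rule basis_exists[of "Rv ` W"])
  have fin: "finite Bs" using Bs(2) by (rule eucl.finiteI_independent)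
  obtain h where h: "bij_betw h {0..<card Bs} Bs" by (rule exE[OF ex_bij_betw_nat_finite[OF fin]])
  have "\<forall>b\<in>Bs. \<exists>y. y \<in> W \<and> Rv y = b" using Bs(1) by auto
  then obtain yb where yb0: "\<forall>b\<in>Bs. yb b \<in> W \<and> Rv (yb b) = b" by (rule bchoice[THEN exE])
  then have yb: "\<And>b. b \<in> Bs \<Longrightarrow> yb b \<in> W \<and> Rv (yb b) = b" by blast
  define K where "K = card Bs"
  define Y where "Y i = yb (h i)" for i
  have hB: "i < K \<Longrightarrow> h i \<in> Bs" for i using bij_betwE[OF h] by (simp add: K_def)
  have propK: "w = 0" if "\<forall>i<K. Rd (Y i) w = 0" for w
  proof (rule ccontr)
    assume w: "w \<noteq> 0"
    have "\<forall>b\<in>Bs. orthogonal w b"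
    proof
      fix b assume b: "b \<in> Bs"
      have "b \<in> h ` {0..<card Bs}" using bij_betw_imp_surj_on[OF h] b by simp
      then obtain i where i0: "i \<in> {0..<card Bs}" "b = h i" by (rule imageE)
      then have i: "i < K" "h i = b" by (simp_all add: K_def)
      have "Rd (Y i) w = 0" using that i by auto
      then have "b \<bullet> w = 0" using yb[OF b] i by (simp add: Y_def Rv_inner[symmetric])
      then show "orthogonal w b" by (simp add: orthogonal_def inner_commute)
    qed
    then have "orthogonal w (Rv y)" if "y \<in> W" for y
      using orthogonal_to_span[of "Rv y" Bs w] Bs(3) that by blast
    moreover obtain y where y: "norm y = 1" "c < f y" "Rd y w \<noteq> 0" using H w by blast
    ultimately have "orthogonal w (Rv y)" by (simp add: W_def)
    then have "Rv y \<bullet> w = 0" by (simp add: orthogonal_def inner_commute)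
    then show False using y(3) by (simp add: Rv_inner)
  qed
  have "K > 0"
  proof (rule ccontr)
    assume "\<not> K > 0"
    then have "\<forall>i<K. Rd (Y i) w = 0" for w by simp
    then have "\<forall>w::real^'n. w = 0" using propK by blast
    moreover obtain b :: "real^'n" where "b \<in> Basis" by (meson ex_in_conv nonempty_Basis)
    ultimately show False by (metis nonzero_Basis)
  qed
  moreover have "\<forall>i<K. norm (Y i) = 1 \<and> c < f (Y i)" using yb hB by (auto simp: Y_def W_def)
  ultimately show ?thesis using propK by blast
qed

lemma sep_bound:
  fixes K :: nat and Y :: "nat \<Rightarrow> real^'n"
  assumes P: "\<forall>w. (\<forall>i<K. Rd (Y i) w = 0) \<longrightarrow> w = 0"
  shows "\<exists>m>0. \<forall>w. norm w = 1 \<longrightarrow> m \<le> (\<Sum>i<K. \<bar>Rv (Y i) \<bullet> w\<bar>)"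
proof -
  obtain b :: "real^'n" where b: "b \<in> Basis" by (meson ex_in_conv nonempty_Basis)
  have ne: "sphere (0::real^'n) 1 \<noteq> {}" using b by (auto simp: norm_Basis intro!: exI[of _ b])
  have "continuous_on (sphere 0 1) (\<lambda>w. \<Sum>i<K. \<bar>Rv (Y i) \<bullet> w\<bar>)"
    by (intro continuous_intros)
  from continuous_attains_inf[OF compact_sphere ne this]
  obtain w0 where w0: "w0 \<in> sphere 0 1" "\<And>w. w \<in> sphere 0 1 \<Longrightarrow> (\<Sum>i<K. \<bar>Rv (Y i) \<bullet> w0\<bar>) \<le> (\<Sum>i<K. \<bar>Rv (Y i) \<bullet> w\<bar>)"
    by blast
  have "(\<Sum>i<K. \<bar>Rv (Y i) \<bullet> w0\<bar>) > 0"
  proof (rule ccontr)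
    assume "\<not> ?thesis"
    then have "(\<Sum>i<K. \<bar>Rv (Y i) \<bullet> w0\<bar>) = 0" by (meson leI order_antisym sum_nonneg abs_ge_zero)
    then have "\<forall>i<K. \<bar>Rv (Y i) \<bullet> w0\<bar> = 0"
      using sum_nonneg_eq_0_iff[of "{..<K}" "\<lambda>i. \<bar>Rv (Y i) \<bullet> w0\<bar>"] by auto
    then have "w0 = 0" using P by (simp add: Rv_inner)
    then show False using w0(1) by simp
  qed
  then show ?thesis using w0 by (intro exI[of _ "\<Sum>i<K. \<bar>Rv (Y i) \<bullet> w0\<bar>"]) auto
qed

lemma block_delta:
  fixes K :: nat and Y :: "nat \<Rightarrow> real^'n" and m :: real
  assumes K: "K > 0" and m: "m > 0" and Y: "\<forall>i<K. norm (Y i) = 1 \<and> c < f (Y i)"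
  shows "\<exists>\<delta>>0. \<forall>i<K. \<forall>z. dist z (Y i) < \<delta> \<longrightarrow>
            z \<noteq> 0 \<and> c < f z \<and> norm (Rv z - Rv (Y i)) < m / real K"
proof -
  have "\<forall>i<K. \<exists>d>0. \<forall>z. dist z (Y i) < d \<longrightarrow> z \<noteq> 0 \<and> c < f z \<and> norm (Rv z - Rv (Y i)) < m / real K"
  proof (intro allI impI)
    fix i assume i: "i < K"
    have y0: "Y i \<noteq> 0" using Y i by auto
    have "continuous (at (Y i)) f" using f_cont[OF y0] .
    moreover have pos1: "f (Y i) - c > 0" using Y i by simp
    ultimately obtain d1 where d1: "d1 > 0" "\<And>z. dist z (Y i) < d1 \<Longrightarrow> dist (f z) (f (Y i)) < f (Y i) - c"
      unfolding continuous_at_eps_delta by (elim allE[of _ "f (Y i) - c"] impE exE conjE) auto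
    have "continuous (at (Y i)) Rv" using Rv_cont[OF y0] .
    moreover have "m / real K > 0" using m K by simp
    ultimately obtain d2 where d2: "d2 > 0" "\<And>z. dist z (Y i) < d2 \<Longrightarrow> dist (Rv z) (Rv (Y i)) < m / real K"
      unfolding continuous_at_eps_delta by (elim allE[of _ "m / real K"] impE exE conjE) auto
    show "\<exists>d>0. \<forall>z. dist z (Y i) < d \<longrightarrow> z \<noteq> 0 \<and> c < f z \<and> norm (Rv z - Rv (Y i)) < m / real K"
    proof (intro exI[of _ "min 1 (min d1 d2)"] conjI allI impI)
      show "min 1 (min d1 d2) > 0" using d1 d2 by simp
      fix z assume z: "dist z (Y i) < min 1 (min d1 d2)"
      show "z \<noteq> 0"
      proof
        assume "z = 0" then show False using z Y i by (simp add: dist_norm)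
      qed
      show "c < f z" using d1(2)[of z] z by (simp add: dist_real_def abs_less_iff)
      show "norm (Rv z - Rv (Y i)) < m / real K" using d2(2)[of z] z by (simp add: dist_norm)
    qed
  qed
  then have "\<forall>i. \<exists>d. i < K \<longrightarrow> d > 0 \<and> (\<forall>z. dist z (Y i) < d \<longrightarrow> z \<noteq> 0 \<and> c < f z \<and> norm (Rv z - Rv (Y i)) < m / real K)"
    by auto
  then obtain d where d0: "\<forall>i. i < K \<longrightarrow> d i > 0 \<and> (\<forall>z. dist z (Y i) < d i \<longrightarrow> z \<noteq> 0 \<and> c < f z \<and> norm (Rv z - Rv (Y i)) < m / real K)"
    by (rule choice[THEN exE])
  then have d: "\<And>i. i < K \<Longrightarrow> d i > 0 \<and> (\<forall>z. dist z (Y i) < d i \<longrightarrow> z \<noteq> 0 \<and> c < f z \<and> norm (Rv z - Rv (Y i)) < m / real K)"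
    by blast
  define \<delta> where "\<delta> = Min (d ` {..<K})"
  have fin: "finite (d ` {..<K})" by simp
  have ne: "d ` {..<K} \<noteq> {}" using K by auto
  have "\<delta> > 0" unfolding \<delta>_def using d by (simp add: Min_gr_iff[OF fin ne])
  moreover have "\<forall>i<K. \<forall>z. dist z (Y i) < \<delta> \<longrightarrow> z \<noteq> 0 \<and> c < f z \<and> norm (Rv z - Rv (Y i)) < m / real K"
  proof (intro allI impI)
    fix i z assume i: "i < K" and z: "dist z (Y i) < \<delta>"
    have "\<delta> \<le> d i" unfolding \<delta>_def using i fin by simp
    then have "dist z (Y i) < d i" using z by simp
    then show "z \<noteq> 0 \<and> c < f z \<and> norm (Rv z - Rv (Y i)) < m / real K" using d[OF i] by blast
  qed
  ultimately show ?thesis by blast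
qed

end

context LA begin

lemma near_G:
  assumes eps: "\<epsilon> > 0"
  shows "\<exists>\<delta>>0. \<forall>v. norm v = 1 \<and> lambda1 A B - \<delta> < f v \<longrightarrow> infdist v (geneig_space A B (lambda1 A B)) < \<epsilon>"
proof (rule ccontr)
  assume neg: "\<not> ?thesis"
  define G where "G = geneig_space A B (lambda1 A B)"
  define \<Lambda> where "\<Lambda> = lambda1 A B"
  have nt: "\<forall>\<delta>>0. \<exists>v. norm v = 1 \<and> \<Lambda> - \<delta> < f v \<and> \<not> infdist v G < \<epsilon>"
  proof (intro allI impI)
    fix \<delta> :: real assume d: "\<delta> > 0"
    show "\<exists>v. norm v = 1 \<and> \<Lambda> - \<delta> < f v \<and> \<not> infdist v G < \<epsilon>"
    proof (rule ccontr)
      assume "\<not> (\<exists>v. norm v = 1 \<and> \<Lambda> - \<delta> < f v \<and> \<not> infdist v G < \<epsilon>)"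
      then have "\<forall>v. norm v = 1 \<and> \<Lambda> - \<delta> < f v \<longrightarrow> infdist v G < \<epsilon>" by simp
      then show False using neg d unfolding G_def \<Lambda>_def by blast
    qed
  qed
  have "\<forall>n::nat. \<exists>v. norm v = 1 \<and> \<Lambda> - 1 / real (Suc n) < f v \<and> \<not> infdist v G < \<epsilon>"
  proof
    fix n :: nat
    have "1 / real (Suc n) > 0" by simp
    from nt[rule_format, OF this] show "\<exists>v. norm v = 1 \<and> \<Lambda> - 1 / real (Suc n) < f v \<and> \<not> infdist v G < \<epsilon>" .
  qed
  then obtain V where V: "\<forall>n. norm (V n) = 1 \<and> \<Lambda> - 1 / real (Suc n) < f (V n) \<and> \<not> infdist (V n) G < \<epsilon>"
    by (rule choice[THEN exE])
  have Vs: "\<And>n. V n \<in> sphere 0 1" using V by simp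
  have ex: "\<exists>l\<in>sphere 0 1. \<exists>r. strict_mono r \<and> (V \<circ> r) \<longlonglongrightarrow> l"
    by (rule compact_imp_seq_compact[OF compact_sphere, unfolded seq_compact_def, rule_format, OF Vs])
  then obtain l where l: "l \<in> sphere 0 1" and ex2: "\<exists>r. strict_mono r \<and> (V \<circ> r) \<longlonglongrightarrow> l"
    by (rule bexE)
  from ex2 obtain r where r: "strict_mono r" and lim: "(V \<circ> r) \<longlonglongrightarrow> l"
    by (elim exE conjE)
  have l0: "l \<noteq> 0" using l by auto
  have flim: "(\<lambda>n. f (V (r n))) \<longlonglongrightarrow> f l"
    using lim f_cont[OF l0] isCont_tendsto_compose[of l f "V \<circ> r"] by (simp add: o_def)
  have lo0: "(\<lambda>n. 1 / real (Suc n)) \<longlonglongrightarrow> 0"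
    using LIMSEQ_inverse_real_of_nat by (simp add: inverse_eq_divide)
  have lo: "(\<lambda>n. \<Lambda> - 1 / real (Suc n)) \<longlonglongrightarrow> \<Lambda>"
    using tendsto_diff[OF tendsto_const lo0, of \<Lambda>] by (simp only: diff_zero)
  have "(\<lambda>n. f (V (r n))) \<longlonglongrightarrow> \<Lambda>"
  proof (rule tendsto_sandwich[OF _ _ lo tendsto_const])
    show "\<forall>\<^sub>F n in sequentially. \<Lambda> - 1 / real (Suc n) \<le> f (V (r n))"
    proof (rule always_eventually, rule allI)
      fix n
      have "n \<le> r n" using seq_suble[OF r] .
      then have "1 / real (Suc (r n)) \<le> 1 / real (Suc n)" by (simp add: frac_le)
      then show "\<Lambda> - 1 / real (Suc n) \<le> f (V (r n))" using V[rule_format, of "r n"] by linarith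
    qed
    show "\<forall>\<^sub>F n in sequentially. f (V (r n)) \<le> \<Lambda>"
      by (rule always_eventually) (simp add: \<Lambda>_def f_le_l1)
  qed
  from LIMSEQ_unique[OF flim this] have fl: "f l = \<Lambda>" .
  have mx: "\<forall>v. v \<noteq> 0 \<longrightarrow> f v \<le> f l"
  proof (intro allI impI)
    fix v :: "real^'n"
    show "f v \<le> f l" unfolding fl \<Lambda>_def by (rule f_le_l1)
  qed
  have "eigv (f l) l" by (rule FO[OF l0 mx])
  then have "eigv (lambda1 A B) l" unfolding fl \<Lambda>_def .
  then have lG: "l \<in> G" using l0 by (simp add: G_def geneig_space_eq)
  have "(\<lambda>n. dist (V (r n)) l) \<longlonglongrightarrow> 0"
  proof -
    have lim2: "(\<lambda>n. V (r n)) \<longlonglongrightarrow> l" using lim by (simp only: comp_def)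
    show ?thesis using tendsto_dist[OF lim2 tendsto_const[of l]] by (simp only: dist_self)
  qed
  from LIMSEQ_D[OF this eps] obtain N where N0: "\<forall>n\<ge>N. norm (dist (V (r n)) l - 0) < \<epsilon>"
    by (rule exE)
  have N: "dist (V (r n)) l < \<epsilon>" if "n \<ge> N" for n using N0 that by simp
  have "infdist (V (r N)) G < \<epsilon>" using infdist_le[OF lG, of "V (r N)"] N[of N] by simp
  moreover have "\<not> infdist (V (r N)) G < \<epsilon>" using V by simp
  ultimately show False by simp
qed

lemma infdist_conv:
  assumes u: "\<And>k. norm (u k) = 1" and lim: "(\<lambda>k. f (u k)) \<longlonglongrightarrow> lambda1 A B"
  shows "(\<lambda>k. infdist (u k) (geneig_space A B (lambda1 A B))) \<longlonglongrightarrow> 0"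
proof (rule LIMSEQ_I)
  fix \<epsilon> :: real assume eps: "\<epsilon> > 0"
  obtain \<delta> where d: "\<delta> > 0" "\<And>v. norm v = 1 \<Longrightarrow> lambda1 A B - \<delta> < f v \<Longrightarrow>
      infdist v (geneig_space A B (lambda1 A B)) < \<epsilon>"
    using near_G[OF eps] by auto
  from LIMSEQ_D[OF lim d(1)] obtain N where N0: "\<forall>n\<ge>N. norm (f (u n) - lambda1 A B) < \<delta>"
    by (rule exE)
  have N: "n \<ge> N \<Longrightarrow> norm (f (u n) - lambda1 A B) < \<delta>" for n using N0 by simp
  show "\<exists>no. \<forall>n\<ge>no. norm (infdist (u n) (geneig_space A B (lambda1 A B)) - 0) < \<epsilon>"
  proof (intro exI allI impI)
    fix n assume "n \<ge> N"
    then have "lambda1 A B - \<delta> < f (u n)" using N[of n] by (simp add: abs_less_iff)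
    then have "infdist (u n) (geneig_space A B (lambda1 A B)) < \<epsilon>" using d(2) u by blast
    then show "norm (infdist (u n) (geneig_space A B (lambda1 A B)) - 0) < \<epsilon>"
      by (simp add: abs_of_nonneg infdist_nonneg)
  qed
qed

end

locale RUN = LA A B for A :: "real^'n^'m" and B :: "real^'n^'l" +
  fixes v :: "nat \<Rightarrow> real^'n" and x :: "nat \<Rightarrow> real^'n" and \<tau> :: "nat \<Rightarrow> real"
  assumes \<tau>_max: "\<And>k. (\<exists>t. is_line_max A B (v k) (x k) t) \<Longrightarrow> is_line_max A B (v k) (x k) (\<tau> k)"
    and \<tau>_none: "\<And>k. \<not> (\<exists>t. is_line_max A B (v k) (x k) t) \<Longrightarrow> \<tau> k = 0"
    and vSuc: "\<And>k. v (Suc k) = (v k + \<tau> k *\<^sub>R x k) /\<^sub>R norm (v k + \<tau> k *\<^sub>R x k)"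
    and v0: "norm (v 0) = 1"
begin

lemma unit: "norm (v k) = 1"
proof (induction k)
  case 0 then show ?case using v0 .
next
  case (Suc k)
  show ?case
  proof (cases "\<exists>t. is_line_max A B (v k) (x k) t")
    case True
    then have "v k + \<tau> k *\<^sub>R x k \<noteq> 0" using \<tau>_max[OF True] by (simp add: is_line_max_def)
    then show ?thesis by (simp add: vSuc)
  next
    case False
    then show ?thesis using \<tau>_none[OF False] Suc by (simp add: vSuc)
  qed
qed

lemma v_nz: "v k \<noteq> 0" using unit[of k] by auto

lemma stay: "\<not> (\<exists>t. is_line_max A B (v k) (x k) t) \<Longrightarrow> v (Suc k) = v k"
  using \<tau>_none[of k] unit[of k] by (simp add: vSuc)

lemma f_next: "(\<exists>t. is_line_max A B (v k) (x k) t) \<Longrightarrow> f (v (Suc k)) = f (v k + \<tau> k *\<^sub>R x k)"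
proof -
  assume "\<exists>t. is_line_max A B (v k) (x k) t"
  then have "v k + \<tau> k *\<^sub>R x k \<noteq> 0" using \<tau>_max by (simp add: is_line_max_def)
  then show ?thesis by (simp add: vSuc rq_scale)
qed

lemma mono_step: "f (v k) \<le> f (v (Suc k))"
proof (cases "\<exists>t. is_line_max A B (v k) (x k) t")
  case True
  then show ?thesis using f_next[OF True] line_max_ge0[OF v_nz \<tau>_max[OF True]] by simp
next
  case False then show ?thesis using stay by simp
qed

lemma f_mono: "mono (\<lambda>k. f (v k))"
  using mono_step by (intro incseq_SucI) auto

lemma good_step: "(\<exists>t. is_line_max A B (v k) (x k) t) \<Longrightarrow> x k \<noteq> 0 \<Longrightarrow> f (x k) \<le> f (v (Suc k))"
  using f_next line_max_ge \<tau>_max by simp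

lemma f_mono_le: "k \<le> k' \<Longrightarrow> f (v k) \<le> f (v k')"
  using f_mono by (simp add: mono_def)

lemma block:
  fixes K :: nat and Y :: "nat \<Rightarrow> real^'n" and m \<delta> c :: real
  assumes K: "K > 0"
    and mY: "\<forall>w. norm w = 1 \<longrightarrow> m \<le> (\<Sum>i<K. \<bar>Rv (Y i) \<bullet> w\<bar>)"
    and dY: "\<forall>i<K. \<forall>z. dist z (Y i) < \<delta> \<longrightarrow> z \<noteq> 0 \<and> c < f z \<and> norm (Rv z - Rv (Y i)) < m / real K"
    and xs: "\<forall>i<K. dist (x (k0 + i)) (Y i) < \<delta>"
  shows "\<exists>k. c < f (v k)"
proof (rule ccontr)
  assume "\<not> ?thesis"
  then have le: "\<And>k. f (v k) \<le> c" by (simp add: not_less)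
  have xi: "x (k0 + i) \<noteq> 0 \<and> c < f (x (k0 + i)) \<and> norm (Rv (x (k0 + i)) - Rv (Y i)) < m / real K"
    if "i < K" for i using dY xs that by blast
  have nomax: "\<not> (\<exists>t. is_line_max A B (v (k0 + i)) (x (k0 + i)) t)" if "i < K" for i
  proof
    assume ex: "\<exists>t. is_line_max A B (v (k0 + i)) (x (k0 + i)) t"
    have "c < f (x (k0 + i))" using xi[OF that] by blast
    also have "\<dots> \<le> f (v (Suc (k0 + i)))" using good_step[OF ex] xi[OF that] by blast
    finally show False using le[of "Suc (k0 + i)"] by simp
  qed
  have const: "i \<le> K \<Longrightarrow> v (k0 + i) = v k0" for i
  proof (induction i)
    case 0 then show ?case by simp
  next
    case (Suc i)
    then have "v (k0 + Suc i) = v (k0 + i)" using stay[OF nomax[of i]] by simp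
    then show ?case using Suc by simp
  qed
  define w where "w = v k0"
  have w1: "norm w = 1" using unit by (simp add: w_def)
  have Rd0: "Rd (x (k0 + i)) w = 0" if "i < K" for i
  proof (rule ccontr)
    assume "Rd (x (k0 + i)) w \<noteq> 0"
    then have "\<exists>t. is_line_max A B w (x (k0 + i)) t" by (rule line_max_exists)
    then show False using nomax[OF that] const[of i] that by (simp add: w_def)
  qed
  have "(\<Sum>i<K. \<bar>Rv (Y i) \<bullet> w\<bar>) < (\<Sum>i<K. m / real K)"
  proof (rule sum_strict_mono)
    show "{..<K} \<noteq> {}" using K by auto
    fix i assume "i \<in> {..<K}"
    then have i: "i < K" by simp
    have "Rv (Y i) \<bullet> w = (Rv (Y i) - Rv (x (k0 + i))) \<bullet> w"
      using Rd0[OF i] by (simp add: inner_diff_left Rv_inner)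
    then have "\<bar>Rv (Y i) \<bullet> w\<bar> \<le> norm (Rv (Y i) - Rv (x (k0 + i))) * norm w"
      by (simp add: Cauchy_Schwarz_ineq2)
    also have "\<dots> = norm (Rv (x (k0 + i)) - Rv (Y i))" using w1 by (simp add: norm_minus_commute)
    also have "\<dots> < m / real K" using xi[OF i] by blast
    finally show "\<bar>Rv (Y i) \<bullet> w\<bar> < m / real K" .
  qed simp
  also have "\<dots> = m" using K by simp
  finally show False using mY[rule_format, OF w1] by linarith
qed

lemma f_conv:
  assumes "\<forall>n::nat. \<exists>k. lambda1 A B - 1 / real (Suc n) < f (v k)"
  shows "(\<lambda>k. f (v k)) \<longlonglongrightarrow> lambda1 A B"
proof (rule LIMSEQ_I)
  fix r :: real assume r: "r > 0"
  obtain n where "inverse (real (Suc n)) < r" using reals_Archimedean[OF r] by blast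
  then have n: "1 / real (Suc n) < r" by (simp add: inverse_eq_divide)
  obtain k0 where k0: "lambda1 A B - 1 / real (Suc n) < f (v k0)" using assms by blast
  show "\<exists>no. \<forall>k\<ge>no. norm (f (v k) - lambda1 A B) < r"
  proof (intro exI allI impI)
    fix k assume "k0 \<le> k"
    then have "f (v k0) \<le> f (v k)" by (rule f_mono_le)
    moreover have "f (v k) \<le> lambda1 A B" by (rule f_le_l1)
    ultimately show "norm (f (v k) - lambda1 A B) < r" using k0 n by simp
  qed
qed

end

lemma us_ball_pos:
  fixes y :: "real^'n"
  assumes y: "norm y = 1" and d: "\<delta> > 0"
  shows "emeasure uniform_sphere (ball y \<delta>) > 0"
proof -
  define U where "U = uniform_measure lborel (ball (0::real^'n) 1)"
  define N where "N = (\<lambda>z::real^'n. z /\<^sub>R norm z)"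
  have Nb: "N \<in> borel_measurable borel" unfolding N_def by measurable
  have Nm: "N \<in> borel_measurable U"
    using Nb by (simp add: U_def measurable_cong_sets[OF sets_uniform_measure refl] sets_lborel)
  have ub: "ball (0::real^'n) 1 \<in> sets lborel" by simp
  have pre: "N -` ball y \<delta> \<in> sets lborel"
    using Nb by (simp add: measurable_sets_borel)
  have e1: "emeasure uniform_sphere (ball y \<delta>) = emeasure U (N -` ball y \<delta> \<inter> space U)"
    unfolding uniform_sphere_def U_def[symmetric] N_def[symmetric]
    by (rule emeasure_distr[OF Nm]) simp
  also have "\<dots> = emeasure lborel (ball 0 1 \<inter> N -` ball y \<delta>) / emeasure lborel (ball (0::real^'n) 1)"
    unfolding U_def using emeasure_uniform_measure[OF ub, of "N -` ball y \<delta>"] pre by simp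
  finally have e2: "emeasure uniform_sphere (ball y \<delta>) =
      emeasure lborel (ball 0 1 \<inter> N -` ball y \<delta>) / emeasure lborel (ball (0::real^'n) 1)" .
  define Oset where "Oset = ball (0::real^'n) 1 \<inter> (N -` ball y \<delta> \<inter> {z. z \<noteq> 0})"
  have cN: "continuous_on {z::real^'n. z \<noteq> 0} N"
    unfolding N_def by (intro continuous_intros) auto
  have on0: "open {z::real^'n. z \<noteq> 0}"
    by (rule open_Collect_neq) (intro continuous_intros)+
  have "open (N -` ball y \<delta> \<inter> {z. z \<noteq> 0})"
    using cN on0 continuous_on_open_vimage by blast
  then have oO: "open Oset" unfolding Oset_def by (rule open_Int[OF open_ball])
  have yO: "(1/2) *\<^sub>R y \<in> Oset"
  proof -
    have "N ((1/2) *\<^sub>R y) = y" using y by (simp add: N_def)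
    then show ?thesis using y d by (auto simp: Oset_def)
  qed
  obtain r where r: "r > 0" "ball ((1/2) *\<^sub>R y) r \<subseteq> Oset"
    using oO yO open_contains_ball by blast
  have "emeasure lborel (ball ((1/2) *\<^sub>R y) r) > 0"
    using r(1) by (simp add: emeasure_ball unit_ball_vol_pos)
  also have "emeasure lborel (ball ((1/2) *\<^sub>R y) r) \<le> emeasure lborel (ball 0 1 \<inter> N -` ball y \<delta>)"
    by (rule emeasure_mono) (use r(2) pre in \<open>auto simp: Oset_def\<close>)
  finally have "emeasure lborel (ball 0 1 \<inter> N -` ball y \<delta>) > 0" .
  then show ?thesis unfolding e2 ennreal_zero_less_divide using emeasure_lborel_ball_finite by simp
qed

lemma gauss_nz: "AE z in (std_gaussian :: (real^'n) measure). z \<noteq> 0"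
proof -
  have m: "(\<lambda>x::real^'n. ennreal ((2 * pi) powr (- real CARD('n) / 2) * exp (- (norm x)\<^sup>2 / 2)))
      \<in> borel_measurable lborel" by measurable
  have "AE x in (lborel :: (real^'n) measure). x \<noteq> 0" by (rule AE_lborel_singleton)
  then have "AE x in (lborel :: (real^'n) measure).
      0 < ennreal ((2 * pi) powr (- real CARD('n) / 2) * exp (- (norm x)\<^sup>2 / 2)) \<longrightarrow> x \<noteq> 0"
    by (rule AE_mp) simp
  then show ?thesis unfolding std_gaussian_def using AE_density[OF m] by simp
qed

lemma key_block_prob:
  fixes M :: "'w measure" and g :: "'w \<Rightarrow> real^'n" and x :: "nat \<Rightarrow> 'w \<Rightarrow> real^'n"
    and K :: nat and Y :: "nat \<Rightarrow> real^'n" and \<delta> :: real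
  assumes P: "prob_space M"
    and x_rv: "\<And>k. x k \<in> borel_measurable M"
    and x_dist: "\<And>k. distr M borel (x k) = uniform_sphere"
    and indep: "prob_space.indep_vars M (\<lambda>_. borel)
                  (\<lambda>i. case i of None \<Rightarrow> g | Some k \<Rightarrow> x k) UNIV"
    and K: "K > 0" and d: "\<delta> > 0" and Y: "\<And>i. i < K \<Longrightarrow> norm (Y i) = 1"
  shows "AE \<omega> in M. \<exists>j. \<forall>i<K. dist (x (j * K + i) \<omega>) (Y i) < \<delta>"
proof -
  interpret prob_space M by (rule P)
  define X where "X = (\<lambda>i. case i of None \<Rightarrow> g | Some k \<Rightarrow> x k)"
  define Bl where "Bl k = ball (Y (k mod K)) \<delta>" for k
  define Gk where "Gk k = x k -` Bl k \<inter> space M" for k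
  have Gev: "Gk k \<in> events" for k
    unfolding Gk_def by (rule measurable_sets[OF x_rv]) (simp add: Bl_def)
  have Gsp: "Gk k \<subseteq> space M" for k by (simp add: Gk_def)
  have iv: "indep_sets (\<lambda>i. sigma_sets (space M) {X i -` B \<inter> space M | B. B \<in> sets borel}) UNIV"
    using indep unfolding X_def[symmetric] indep_vars_def by blast
  have iG: "indep_sets (\<lambda>k. {Gk k}) UNIV"
  proof (rule indep_setsI)
    show "{Gk i} \<subseteq> events" for i using Gev by simp
    fix A J assume J: "J \<noteq> {}" "J \<subseteq> UNIV" "finite J" "\<forall>j\<in>J. A j \<in> {Gk j}"
    have AJ: "A j = Gk j" if "j \<in> J" for j using J(4) that by simp
    define A' where "A' ix = (case ix of None \<Rightarrow> space M | Some j \<Rightarrow> A j)" for ix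
    have "prob (\<Inter>ix\<in>Some ` J. A' ix) = (\<Prod>ix\<in>Some ` J. prob (A' ix))"
    proof (rule indep_setsD[OF iv])
      show "Some ` J \<subseteq> UNIV" "Some ` J \<noteq> {}" "finite (Some ` J)" using J by auto
      show "\<forall>j\<in>Some ` J. A' j \<in> sigma_sets (space M) {X j -` B \<inter> space M | B. B \<in> sets borel}"
      proof
        fix ix assume "ix \<in> Some ` J"
        then obtain j where j: "j \<in> J" "ix = Some j" by blast
        have "A' ix = x j -` Bl j \<inter> space M" using j AJ by (simp add: A'_def Gk_def)
        moreover have "Bl j \<in> sets borel" by (simp add: Bl_def)
        ultimately have "A' ix \<in> {X ix -` B \<inter> space M | B. B \<in> sets borel}"
          using j by (auto simp: X_def)
        then show "A' ix \<in> sigma_sets (space M) {X ix -` B \<inter> space M | B. B \<in> sets borel}"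
          by (rule sigma_sets.Basic)
      qed
    qed
    moreover have "(\<Inter>ix\<in>Some ` J. A' ix) = (\<Inter>j\<in>J. A j)" by (simp add: A'_def)
    moreover have "(\<Prod>ix\<in>Some ` J. prob (A' ix)) = (\<Prod>j\<in>J. prob (A j))"
      by (simp add: prod.reindex A'_def)
    ultimately show "prob (\<Inter>j\<in>J. A j) = (\<Prod>j\<in>J. prob (A j))" by simp
  qed
  define I where "I j = {j * K..<j * K + K}" for j
  have Ine: "I j \<noteq> {}" for j using K by (simp add: I_def)
  have Ifin: "finite (I j)" for j by (simp add: I_def)
  have disj: "disjoint_family_on I UNIV"
  proof (unfold disjoint_family_on_def, intro ballI impI)
    fix j j' :: nat assume "j \<noteq> j'"
    then have "j < j' \<or> j' < j" by arith
    then show "I j \<inter> I j' = {}"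
    proof
      assume "j < j'"
      then have "j * K + K \<le> j' * K" using K
        by (metis add.commute mult.commute mult_Suc_right Suc_leI mult_le_mono2)
      then show ?thesis by (auto simp: I_def)
    next
      assume "j' < j"
      then have "j' * K + K \<le> j * K" using K
        by (metis add.commute mult.commute mult_Suc_right Suc_leI mult_le_mono2)
      then show ?thesis by (auto simp: I_def)
    qed
  qed
  have iB: "indep_sets (\<lambda>j. sigma_sets (space M) (\<Union>i\<in>I j. {Gk i})) UNIV"
  proof (rule indep_sets_collect_sigma)
    show "indep_sets (\<lambda>k. {Gk k}) (\<Union>j\<in>UNIV. I j)" by (rule indep_sets_mono_index[OF _ iG]) simp
    show "Int_stable {Gk i}" for i by (simp add: Int_stable_def)
    show "disjoint_family_on I UNIV" by (rule disj)
  qed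
  define Fb where "Fb j = (\<Inter>k\<in>I j. Gk k)" for j
  have Fb_ev: "Fb j \<in> events" for j
    unfolding Fb_def by (rule sets.finite_INT[OF Ifin Ine]) (rule Gev)
  have Fb_sig: "Fb j \<in> sigma_sets (space M) (\<Union>i\<in>I j. {Gk i})" for j
    unfolding Fb_def
  proof (rule sigma_sets_INTER)
    show "(\<Union>i\<in>I j. {Gk i}) \<subseteq> Pow (space M)" using Gsp by auto
    show "Gk i \<in> sigma_sets (space M) (\<Union>i\<in>I j. {Gk i})" if "i \<in> I j" for i
      using that by (intro sigma_sets.Basic) auto
    show "I j \<noteq> {}" by (rule Ine)
  qed
  have Cb_sig: "space M - Fb j \<in> sigma_sets (space M) (\<Union>i\<in>I j. {Gk i})" for j
    by (rule sigma_sets.Compl[OF Fb_sig])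
  define q where "q i = measure uniform_sphere (ball (Y i) \<delta>)" for i
  have pG: "prob (Gk k) = q (k mod K)" for k
  proof -
    have "prob (Gk k) = measure (distr M borel (x k)) (Bl k)"
      unfolding Gk_def by (rule measure_distr[symmetric, OF x_rv]) (simp add: Bl_def)
    then show ?thesis by (simp add: x_dist q_def Bl_def)
  qed
  have q_pos: "q i > 0" if "i < K" for i
  proof -
    have "emeasure M (Gk i) = emeasure (distr M borel (x i)) (Bl i)"
      unfolding Gk_def by (rule emeasure_distr[symmetric, OF x_rv]) (simp add: Bl_def)
    also have "\<dots> = emeasure uniform_sphere (ball (Y i) \<delta>)" using that by (simp add: x_dist Bl_def)
    also have "\<dots> > 0" using us_ball_pos[OF Y[OF that] d] .
    finally have "emeasure M (Gk i) > 0" .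
    then have "prob (Gk i) > 0" by (simp add: emeasure_eq_measure)
    then show ?thesis using pG[of i] that by simp
  qed
  define p where "p = (\<Prod>i<K. q i)"
  have pF: "prob (Fb j) = p" for j
  proof -
    have "prob (Fb j) = (\<Prod>k\<in>I j. prob (Gk k))"
      unfolding Fb_def by (rule indep_setsD[OF iG]) (use Ine Ifin in auto)
    also have "\<dots> = (\<Prod>k\<in>I j. q (k mod K))" by (simp add: pG)
    also have "\<dots> = (\<Prod>i=0..<K. q ((i + j * K) mod K))"
      unfolding I_def using prod.shift_bounds_nat_ivl[of "\<lambda>k. q (k mod K)" 0 "j * K" K]
      by (simp add: add.commute)
    also have "\<dots> = (\<Prod>i<K. q i)" by (simp add: atLeast0LessThan)
    finally show ?thesis by (simp add: p_def)
  qed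
  have p_pos: "p > 0" unfolding p_def using q_pos by (intro prod_pos) auto
  have p_le: "p \<le> 1" using pF[of 0] prob_le_1[of "Fb 0"] by simp
  define Nset where "Nset = (\<Inter>j. space M - Fb j)"
  have N_ev: "Nset \<in> events" unfolding Nset_def using Fb_ev by (intro sets.countable_INT) auto
  have pN: "prob Nset \<le> (1 - p) ^ Suc n" for n
  proof -
    have ev2: "(\<Inter>j\<in>{..<Suc n}. space M - Fb j) \<in> events"
      using Fb_ev by (intro sets.finite_INT) auto
    have "prob Nset \<le> prob (\<Inter>j\<in>{..<Suc n}. space M - Fb j)"
      by (rule finite_measure_mono[OF _ ev2]) (auto simp: Nset_def)
    also have "\<dots> = (\<Prod>j\<in>{..<Suc n}. prob (space M - Fb j))"
      by (rule indep_setsD[OF iB]) (use Cb_sig in auto)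
    also have "\<dots> = (1 - p) ^ Suc n" using Fb_ev by (simp add: prob_compl pF)
    finally show ?thesis .
  qed
  have "(\<lambda>n. (1 - p) ^ Suc n) \<longlonglongrightarrow> 0"
  proof -
    have "norm (1 - p) < 1" using p_pos p_le by simp
    from LIMSEQ_power_zero[OF this] show ?thesis by (rule LIMSEQ_Suc)
  qed
  then have "prob Nset \<le> 0" by (rule LIMSEQ_le_const) (use pN in blast)
  then have "prob Nset = 0" using measure_nonneg[of M Nset] by linarith
  then have "Nset \<in> null_sets M" using N_ev by (simp add: emeasure_eq_measure null_sets_def)
  then have "AE \<omega> in M. \<omega> \<notin> Nset" by (rule AE_not_in)
  then show ?thesis
  proof (rule AE_mp[OF _ AE_I2], intro impI)
    fix \<omega> assume \<omega>: "\<omega> \<in> space M" "\<omega> \<notin> Nset"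
    then obtain j where "\<omega> \<in> Fb j" by (auto simp: Nset_def)
    then have "\<forall>k\<in>I j. \<omega> \<in> Gk k" by (simp add: Fb_def)
    then have "\<forall>i<K. x (j * K + i) \<omega> \<in> Bl (j * K + i)" by (auto simp: I_def Gk_def)
    then have "\<forall>i<K. dist (x (j * K + i) \<omega>) (Y i) < \<delta>" by (simp add: Bl_def dist_commute)
    then show "\<exists>j. \<forall>i<K. dist (x (j * K + i) \<omega>) (Y i) < \<delta>" by blast
  qed
qed

theorem mainTheorem1:
  fixes A :: "real^'n^'m" and B :: "real^'n^'l"
    and M :: "'w measure"
    and g :: "'w \<Rightarrow> real^'n" and x :: "nat \<Rightarrow> 'w \<Rightarrow> real^'n"
    and \<tau> :: "nat \<Rightarrow> 'w \<Rightarrow> real" and v :: "nat \<Rightarrow> 'w \<Rightarrow> real^'n"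
  assumes d2: "CARD('n) \<ge> 2"
    and kerB: "\<forall>u. B *v u = 0 \<longrightarrow> u = 0"
    and P: "prob_space M"
    and g_rv: "g \<in> borel_measurable M"
    and g_dist: "distr M borel g = std_gaussian"
    and x_rv: "\<And>k. x k \<in> borel_measurable M"
    and x_dist: "\<And>k. distr M borel (x k) = uniform_sphere"
    and indep: "prob_space.indep_vars M (\<lambda>_. borel)
                  (\<lambda>i. case i of None \<Rightarrow> g | Some k \<Rightarrow> x k) UNIV"
    and \<tau>_meas: "\<And>k. \<tau> k \<in> borel_measurable M"
    and \<tau>_max: "\<And>k \<omega>. (\<exists>t. is_line_max A B (v k \<omega>) (x k \<omega>) t) \<Longrightarrow>
                         is_line_max A B (v k \<omega>) (x k \<omega>) (\<tau> k \<omega>)"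
    and \<tau>_none: "\<And>k \<omega>. \<not> (\<exists>t. is_line_max A B (v k \<omega>) (x k \<omega>) t) \<Longrightarrow> \<tau> k \<omega> = 0"
    and v0: "\<And>\<omega>. v 0 \<omega> = g \<omega> /\<^sub>R norm (g \<omega>)"
    and vSuc: "\<And>k \<omega>. v (Suc k) \<omega> =
                 (v k \<omega> + \<tau> k \<omega> *\<^sub>R x k \<omega>) /\<^sub>R norm (v k \<omega> + \<tau> k \<omega> *\<^sub>R x k \<omega>)"
  shows "AE \<omega> in M.
           mono (\<lambda>k. rq A B (v k \<omega>)) \<and>
           (\<lambda>k. rq A B (v k \<omega>)) \<longlonglongrightarrow> lambda1 A B \<and>
           (\<lambda>k. infdist (v k \<omega>) (geneig_space A B (lambda1 A B))) \<longlonglongrightarrow> 0"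
proof -
  interpret LA A B by unfold_locales (rule kerB)
  interpret prob_space M by (rule P)
  obtain e where e: "norm e = 1" "f e = lambda1 A B" "eigv (lambda1 A B) e"
      "\<And>v. v \<noteq> 0 \<Longrightarrow> f v \<le> lambda1 A B"
    by (rule lambda1_props) fast
  have e0: "e \<noteq> 0" using e(1) by auto
  have AEg: "AE \<omega> in M. g \<omega> \<noteq> 0"
  proof -
    have "AE z in distr M borel g. z \<noteq> 0" unfolding g_dist by (rule gauss_nz)
    moreover have "(AE z in distr M borel g. z \<noteq> 0) = (AE \<omega> in M. g \<omega> \<noteq> 0)"
      by (rule AE_distr_iff[OF g_rv]) simp
    ultimately show ?thesis by simp
  qed
  have run: "RUN A B (\<lambda>k. v k \<omega>) (\<lambda>k. x k \<omega>) (\<lambda>k. \<tau> k \<omega>)" if g: "g \<omega> \<noteq> 0" for \<omega>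
  proof (unfold_locales)
    show "is_line_max A B (v k \<omega>) (x k \<omega>) (\<tau> k \<omega>)" if "\<exists>t. is_line_max A B (v k \<omega>) (x k \<omega>) t" for k
      using \<tau>_max that by blast
    show "\<tau> k \<omega> = 0" if "\<not> (\<exists>t. is_line_max A B (v k \<omega>) (x k \<omega>) t)" for k
      using \<tau>_none that by blast
    show "v (Suc k) \<omega> = (v k \<omega> + \<tau> k \<omega> *\<^sub>R x k \<omega>) /\<^sub>R norm (v k \<omega> + \<tau> k \<omega> *\<^sub>R x k \<omega>)" for k
      by (rule vSuc)
    show "norm (v 0 \<omega>) = 1" using g by (simp add: v0)
  qed
  show ?thesis
  proof (cases "\<exists>u. u \<noteq> 0 \<and> f u < lambda1 A B")
    case False
    have fall: "f u = lambda1 A B" if "u \<noteq> 0" for u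
    proof -
      have "\<not> f u < lambda1 A B" using False that by blast
      then show ?thesis using e(4)[OF that] by linarith
    qed
    have inG: "u \<in> geneig_space A B (lambda1 A B)" if u0: "u \<noteq> 0" for u
    proof -
      have "\<forall>w. w \<noteq> 0 \<longrightarrow> f w \<le> f u" using fall u0 by simp
      then have "eigv (f u) u" by (rule FO[OF u0])
      then show ?thesis using u0 fall[OF u0] by (simp add: geneig_space_eq)
    qed
    show ?thesis
    proof (rule AE_mp[OF AEg AE_I2], intro impI)
      fix \<omega> assume g: "g \<omega> \<noteq> 0"
      interpret R: RUN A B "\<lambda>k. v k \<omega>" "\<lambda>k. x k \<omega>" "\<lambda>k. \<tau> k \<omega>" by (rule run[OF g])
      have fv: "f (v k \<omega>) = lambda1 A B" for k using fall R.v_nz by simp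
      have iv: "infdist (v k \<omega>) (geneig_space A B (lambda1 A B)) = 0" for k
        by (rule infdist_zero[OF inG[OF R.v_nz]])
      show "mono (\<lambda>k. f (v k \<omega>)) \<and> (\<lambda>k. f (v k \<omega>)) \<longlonglongrightarrow> lambda1 A B \<and>
          (\<lambda>k. infdist (v k \<omega>) (geneig_space A B (lambda1 A B))) \<longlonglongrightarrow> 0"
        using R.f_mono by (simp add: fv iv)
    qed
  next
    case True
    then obtain u where u: "u \<noteq> 0" "f u < lambda1 A B" by blast
    have key: "AE \<omega> in M. g \<omega> \<noteq> 0 \<longrightarrow> (\<exists>k. lambda1 A B - 1 / real (Suc n) < f (v k \<omega>))" for n
    proof -
      define c where "c = lambda1 A B - 1 / real (Suc n)"
      have c: "c < lambda1 A B" by (simp add: c_def)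
      have H: "\<forall>w. w \<noteq> 0 \<longrightarrow> (\<exists>y. norm y = 1 \<and> c < f y \<and> Rd y w \<noteq> 0)"
        using witness[OF e0 e(3) u c] by blast
      obtain K and Y :: "nat \<Rightarrow> real^'n" where KY: "K > 0" "\<forall>i<K. norm (Y i) = 1 \<and> c < f (Y i)"
          "\<forall>w. (\<forall>i<K. Rd (Y i) w = 0) \<longrightarrow> w = 0"
        using spanning_family[OF H] by blast
      obtain m where m: "m > 0" "\<forall>w. norm w = 1 \<longrightarrow> m \<le> (\<Sum>i<K. \<bar>Rv (Y i) \<bullet> w\<bar>)"
        using sep_bound[OF KY(3)] by blast
      obtain \<delta> where dl: "\<delta> > 0" "\<forall>i<K. \<forall>z. dist z (Y i) < \<delta> \<longrightarrow>
            z \<noteq> 0 \<and> c < f z \<and> norm (Rv z - Rv (Y i)) < m / real K"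
        using block_delta[OF KY(1) m(1) KY(2)] by blast
      have AEb: "AE \<omega> in M. \<exists>j. \<forall>i<K. dist (x (j * K + i) \<omega>) (Y i) < \<delta>"
        by (rule key_block_prob[OF P x_rv x_dist indep KY(1) dl(1)]) (use KY(2) in auto)
      show ?thesis
      proof (rule AE_mp[OF AEb AE_I2], intro impI)
        fix \<omega> assume ex: "\<exists>j. \<forall>i<K. dist (x (j * K + i) \<omega>) (Y i) < \<delta>" and g: "g \<omega> \<noteq> 0"
        interpret R: RUN A B "\<lambda>k. v k \<omega>" "\<lambda>k. x k \<omega>" "\<lambda>k. \<tau> k \<omega>" by (rule run[OF g])
        obtain j where j: "\<forall>i<K. dist (x (j * K + i) \<omega>) (Y i) < \<delta>" using ex by blast
        have "\<exists>k. c < f (v k \<omega>)"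
          by (rule R.block[OF KY(1) m(2) dl(2), of "j * K"]) (use j in simp)
        then show "\<exists>k. lambda1 A B - 1 / real (Suc n) < f (v k \<omega>)" by (simp add: c_def)
      qed
    qed
    have AEall: "AE \<omega> in M. \<forall>n. g \<omega> \<noteq> 0 \<longrightarrow> (\<exists>k. lambda1 A B - 1 / real (Suc n) < f (v k \<omega>))"
      unfolding AE_all_countable using key by blast
    show ?thesis
    proof (rule AE_mp[OF AE_conjI[OF AEg AEall] AE_I2], intro impI)
      fix \<omega> assume H: "g \<omega> \<noteq> 0 \<and> (\<forall>n. g \<omega> \<noteq> 0 \<longrightarrow> (\<exists>k. lambda1 A B - 1 / real (Suc n) < f (v k \<omega>)))"
      then have g: "g \<omega> \<noteq> 0" by blast
      interpret R: RUN A B "\<lambda>k. v k \<omega>" "\<lambda>k. x k \<omega>" "\<lambda>k. \<tau> k \<omega>" by (rule run[OF g])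
      have all: "\<forall>n::nat. \<exists>k. lambda1 A B - 1 / real (Suc n) < f (v k \<omega>)" using H by blast
      have conv: "(\<lambda>k. f (v k \<omega>)) \<longlonglongrightarrow> lambda1 A B" by (rule R.f_conv[OF all])
      have conv2: "(\<lambda>k. infdist (v k \<omega>) (geneig_space A B (lambda1 A B))) \<longlonglongrightarrow> 0"
        by (rule infdist_conv[OF R.unit conv])
      show "mono (\<lambda>k. f (v k \<omega>)) \<and> (\<lambda>k. f (v k \<omega>)) \<longlonglongrightarrow> lambda1 A B \<and>
          (\<lambda>k. infdist (v k \<omega>) (geneig_space A B (lambda1 A B))) \<longlonglongrightarrow> 0"
        using R.f_mono conv conv2 by blast
    qed
  qed
qed

end
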